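(* Let $T$ be a tree with at least $3$ vertices. Then the function $v\mapsto f_{T,v}(v)$ is not constant on $V(T)$.
   Context: For a tree $T$ rooted at $v$, the values $f_{T,v}(w)$, $w\in V(T)$, are defined recursively: if $w$ has no children (no descendants) in the rooted tree, $f_{T,v}(w)=0$; otherwise let $u_0,\dots,u_k$ be the children of $w$, let $T_i$ be the subtree consisting of $u_i$ and all its descendants, rooted at $u_i$, and order them so that $c_i:=f_{T_i,u_i}(u_i)$ satisfy $c_0\ge c_1\ge\cdots\ge c_k$; then $f_{T,v}(w)=\max_{0\le i\le k}(i+c_i)$. *)

theory Defs
  imports Main "HOL-Library.Multiset"
begin

definition simple_graph :: "'a set \<Rightarrow> ('a \<Rightarrow> 'a \<Rightarrow> bool) \<Rightarrow> bool" where
  "simple_graph V E \<longleftrightarrow> finite V \<and> (\<forall>x y. E x y \<longrightarrow> E y x) \<and> (\<forall>x. \<not> E x x)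
     \<and> (\<forall>x y. E x y \<longrightarrow> x \<in> V \<and> y \<in> V)"

definition connected_graph :: "'a set \<Rightarrow> ('a \<Rightarrow> 'a \<Rightarrow> bool) \<Rightarrow> bool" where
  "connected_graph V E \<longleftrightarrow> V \<noteq> {} \<and> (\<forall>x\<in>V. \<forall>y\<in>V. E\<^sup>*\<^sup>* x y)"

definition is_cycle :: "('a \<Rightarrow> 'a \<Rightarrow> bool) \<Rightarrow> 'a list \<Rightarrow> bool" where
  "is_cycle E cs \<longleftrightarrow> length cs \<ge> 3 \<and> distinct cs
     \<and> (\<forall>i. Suc i < length cs \<longrightarrow> E (cs ! i) (cs ! Suc i))
     \<and> E (last cs) (hd cs)"

definition is_tree :: "'a set \<Rightarrow> ('a \<Rightarrow> 'a \<Rightarrow> bool) \<Rightarrow> bool" where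
  "is_tree V E \<longleftrightarrow> simple_graph V E \<and> connected_graph V E \<and> (\<nexists>cs. is_cycle E cs)"

definition fcomb :: "nat multiset \<Rightarrow> nat" where
  "fcomb M = (let xs = rev (sorted_list_of_multiset M) in
     if xs = [] then 0 else Max ((\<lambda>i. i + xs ! i) ` {..<length xs}))"

text \<open>fval E p w c: in the tree, the subtree hanging at w away from its parent p
(p = None if w is the root) has value c = f_{T_w,w}(w).  The children of w are
its neighbours other than the parent.\<close>

inductive fval :: "('a \<Rightarrow> 'a \<Rightarrow> bool) \<Rightarrow> 'a option \<Rightarrow> 'a \<Rightarrow> nat \<Rightarrow> bool" for E where
  "\<lbrakk> C = {u. E w u \<and> p \<noteq> Some u}; finite C;
     \<forall>u\<in>C. fval E (Some w) u (g u) \<rbrakk>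
   \<Longrightarrow> fval E p w (fcomb (image_mset g (mset_set C)))"

definition froot :: "('a \<Rightarrow> 'a \<Rightarrow> bool) \<Rightarrow> 'a \<Rightarrow> nat" where
  "froot E v = (THE c. fval E None v c)"

end

theory Submission
  imports Defs
begin

definition D :: "nat list \<Rightarrow> nat" where
 "D xs = (if xs = [] then 0 else Max ((\<lambda>i. i + xs ! i) ` {..<length xs}))"

lemma fcomb_D: "fcomb M = D (rev (sorted_list_of_multiset M))"
  unfolding fcomb_def D_def Let_def by simp

lemma D_Cons: "ys \<noteq> [] \<Longrightarrow> D (x # ys) = max x (D ys + 1)"
proof -
  assume ys: "ys \<noteq> []"
  have "(\<lambda>i. i + (x#ys) ! i) ` {..<length (x#ys)} = insert x ((\<lambda>i. i + ys ! i + 1) ` {..<length ys})"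
    by (auto simp: lessThan_Suc_eq_insert_0 image_image)
  moreover have "Max ((\<lambda>i. i + ys ! i + 1) ` {..<length ys}) = Max ((\<lambda>i. i + ys ! i) ` {..<length ys}) + 1"
    using ys by (intro Max_add_commute) auto
  moreover have "Max (insert x ((\<lambda>i. i + ys ! i + 1) ` {..<length ys})) = max x (Max ((\<lambda>i. i + ys ! i + 1) ` {..<length ys}))"
    using ys by (intro Max_insert) auto
  ultimately have "Max ((\<lambda>i. i + (x#ys) ! i) ` {..<length (x#ys)}) = max x (D ys + 1)"
    using ys unfolding D_def by simp
  thus ?thesis unfolding D_def by simp
qed

lemma D_single: "D [x] = x" by (simp add: D_def lessThan_Suc)

lemma sorted_add_max:
  assumes "\<forall>y\<in>#R. y \<le> x"
  shows "sorted_list_of_multiset (add_mset x R) = sorted_list_of_multiset R @ [x]"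
proof -
  let ?xs = "sorted_list_of_multiset R"
  have "sorted_list_of_multiset (add_mset x R) = sorted_list_of_multiset (mset (?xs @ [x]))"
    by simp
  also have "\<dots> = sort (?xs @ [x])" by (rule sorted_list_of_multiset_mset)
  also have "\<dots> = ?xs @ [x]"
    using assms by (intro sorted_sort_id) (auto simp: sorted_append)
  finally show ?thesis .
qed

lemma fcomb_add_max:
  assumes "\<forall>y\<in>#R. y \<le> x"
  shows "fcomb (add_mset x R) = (if R = {#} then x else max x (fcomb R + 1))"
proof -
  have e: "sorted_list_of_multiset (add_mset x R) = sorted_list_of_multiset R @ [x]"
    using assms by (rule sorted_add_max)
  show ?thesis
  proof (cases "R = {#}")
    case True thus ?thesis by (simp add: fcomb_D D_single)
  next
    case False
    hence "rev (sorted_list_of_multiset R) \<noteq> []"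
      by (metis Nil_is_rev_conv mset.simps(1) mset_sorted_list_of_multiset)
    thus ?thesis using False unfolding fcomb_D e by (simp add: D_Cons)
  qed
qed

lemma fcomb_empty: "fcomb {#} = 0" by (simp add: fcomb_def)

lemma fcomb_ge: assumes "x \<in># M" shows "x \<le> fcomb M"
proof -
  let ?xs = "rev (sorted_list_of_multiset M)"
  have "x \<in> set ?xs" using assms by simp
  then obtain i where i: "i < length ?xs" "?xs ! i = x" by (metis in_set_conv_nth)
  hence "i + ?xs ! i \<le> Max ((\<lambda>i. i + ?xs ! i) ` {..<length ?xs})" by (intro Max_ge) auto
  with i show ?thesis unfolding fcomb_D D_def by auto
qed

lemma fcomb_split_max:
  assumes "M \<noteq> {#}"
  shows "M = add_mset (Max_mset M) (M - {#Max_mset M#})" "\<forall>y\<in># M - {#Max_mset M#}. y \<le> Max_mset M"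
proof -
  have "Max_mset M \<in># M" using assms by simp
  thus "M = add_mset (Max_mset M) (M - {#Max_mset M#})" by simp
  show "\<forall>y\<in># M - {#Max_mset M#}. y \<le> Max_mset M"
    by (meson Max_ge finite_set_mset in_diffD)
qed

lemma fcomb_del_max:
  assumes "fcomb M > 0"
  shows "fcomb (M - {#Max_mset M#}) < fcomb M"
proof -
  have ne: "M \<noteq> {#}" using assms fcomb_empty by auto
  let ?R = "M - {#Max_mset M#}"
  have e: "fcomb M = (if ?R = {#} then Max_mset M else max (Max_mset M) (fcomb ?R + 1))"
    using fcomb_split_max[OF ne] fcomb_add_max by metis
  show ?thesis
  proof (cases "?R = {#}")
    case True thus ?thesis using assms by (simp add: fcomb_empty)
  next
    case False thus ?thesis using e by simp
  qed
qed

lemma fcomb_two: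
  assumes "size M \<ge> 2"
  shows "fcomb M \<ge> 1"
proof -
  have ne: "M \<noteq> {#}" using assms by auto
  let ?R = "M - {#Max_mset M#}"
  have "size ?R \<ge> 1" using assms fcomb_split_max(1)[OF ne]
    by (metis Suc_1 not_less_eq_eq size_add_mset)
  hence "?R \<noteq> {#}" by auto
  moreover have e: "fcomb M = (if ?R = {#} then Max_mset M else max (Max_mset M) (fcomb ?R + 1))"
    using fcomb_split_max[OF ne] fcomb_add_max by metis
  ultimately show ?thesis by simp
qed

lemma edge_half:
  assumes "b \<le> a" "fcomb B = b" "fcomb (add_mset a B) = c" "c \<ge> 1"
  shows "(a = c \<and> b < c) \<or> (a = c - 1 \<and> b = c - 1)"
proof -
  have "\<forall>y\<in>#B. y \<le> a" using assms(1,2) fcomb_ge by (meson le_trans)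
  hence e: "fcomb (add_mset a B) = (if B = {#} then a else max a (fcomb B + 1))"
    by (rule fcomb_add_max)
  show ?thesis
  proof (cases "B = {#}")
    case True thus ?thesis using e assms by (auto simp: fcomb_empty)
  next
    case False thus ?thesis using e assms by auto
  qed
qed

lemma edge_lemma:
  assumes "fcomb A = a" "fcomb B = b" "fcomb (add_mset b A) = c" "fcomb (add_mset a B) = c" "c \<ge> 1"
  shows "(a = c \<and> b < c) \<or> (b = c \<and> a < c) \<or> (a = c - 1 \<and> b = c - 1)"
proof (cases "b \<le> a")
  case True thus ?thesis using edge_half[OF True assms(2,4,5)] by auto
next
  case False
  hence "a \<le> b" by simp
  thus ?thesis using edge_half[OF _ assms(1,3,5)] by auto
qed

lemma mset_step:
  assumes fN: "fcomb N = c" and c1: "c \<ge> 1" and eN: "e \<in># N" and ec: "e \<le> c - 1"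
    and fR: "fcomb (N - {#e#}) \<ge> c - 1"
    and H: "\<forall>x\<in># N - {#e#}. (x = c \<and> fcomb (N - {#x#}) < c) \<or> (x < c \<and> fcomb (N - {#x#}) = c)
               \<or> (x = c - 1 \<and> fcomb (N - {#x#}) = c - 1)"
  shows "\<exists>x\<in># N - {#e#}. x \<ge> c - 1 \<and> fcomb (N - {#x#}) \<le> c - 1"
proof (cases "\<exists>x\<in># N - {#e#}. x = c")
  case True
  then obtain x where x: "x \<in># N - {#e#}" "x = c" by blast
  have "(x = c \<and> fcomb (N - {#x#}) < c) \<or> (x < c \<and> fcomb (N - {#x#}) = c)
               \<or> (x = c - 1 \<and> fcomb (N - {#x#}) = c - 1)" using H x(1) by blast
  hence "fcomb (N - {#x#}) < c" using x(2) c1 by auto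
  hence "c - 1 \<le> x \<and> fcomb (N - {#x#}) \<le> c - 1" using x(2) by linarith
  with x(1) show ?thesis by blast
next
  case False
  let ?R = "N - {#e#}"
  have Nne: "N \<noteq> {#}" using eN by auto
  have allc: "\<forall>x\<in>#N. x \<le> c" using fN fcomb_ge by blast
  have Rlt: "\<forall>x\<in>#?R. x < c" using False allc by (metis in_diffD le_neq_implies_less)
  show ?thesis
  proof (cases "\<exists>x\<in># ?R. x = Max_mset N")
    case True
    then obtain x where x: "x \<in># ?R" "x = Max_mset N" by blast
    have "fcomb (N - {#x#}) < c" using fcomb_del_max[of N] fN c1 x by simp
    with H x Rlt have "x = c - 1 \<and> fcomb (N - {#x#}) = c - 1" by fastforce
    with x show ?thesis by force
  next
    assume False2: "\<not> (\<exists>x\<in># ?R. x = Max_mset N)"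
    have NR: "N = add_mset e ?R" using eN by simp
    have MaxN: "Max_mset N \<in># N" using Nne by simp
    have "Max_mset N = e" using MaxN False2 NR by (metis insert_iff set_mset_add_mset_insert)
    hence Rle: "\<forall>y\<in>#?R. y < e" using False2
      by (metis Max_ge finite_set_mset in_diffD le_neq_implies_less)
    have Rne: "?R \<noteq> {#}"
    proof
      assume "?R = {#}"
      hence "fcomb N = e" using NR by (simp add: fcomb_add_max)
      thus False using fN ec c1 by simp
    qed
    have fNe: "fcomb N = max e (fcomb ?R + 1)"
      using fcomb_add_max[of ?R e] Rle Rne NR by (metis less_imp_le)
    hence fRv: "fcomb ?R = c - 1" using fN fR ec by linarith
    let ?x = "Max_mset ?R"
    have xR: "?x \<in># ?R" using Rne by simp
    have xle: "?x \<le> c - 2" using Rle xR ec by fastforce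
    have "?x < e" using Rle xR by blast
    hence c2: "c \<ge> 2" using ec by linarith
    have "fcomb (?R - {#?x#}) < c - 1" using fcomb_del_max[of ?R] fRv c2 by simp
    have "(?x = c \<and> fcomb (N - {#?x#}) < c) \<or> (?x < c \<and> fcomb (N - {#?x#}) = c)
               \<or> (?x = c - 1 \<and> fcomb (N - {#?x#}) = c - 1)" using H xR by blast
    moreover have "?x \<noteq> c" "?x \<noteq> c - 1" using \<open>?x < e\<close> ec by linarith+
    ultimately have H': "?x < c \<and> fcomb (N - {#?x#}) = c" by argo
    have "N - {#?x#} = add_mset e (?R - {#?x#})"
      using diff_union_single_conv[OF xR, of "{#e#}"] NR by simp
    moreover have "\<forall>y\<in># ?R - {#?x#}. y \<le> e" using Rle by (meson in_diffD less_imp_le)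
    ultimately have "fcomb (N - {#?x#}) = (if ?R - {#?x#} = {#} then e else max e (fcomb (?R - {#?x#}) + 1))"
      by (simp only: fcomb_add_max)
    hence "fcomb (N - {#?x#}) < c" using \<open>fcomb (?R - {#?x#}) < c - 1\<close> ec c2 by auto
    with H' show ?thesis by simp
  qed
qed


lemma no_nbwalk:
  assumes T: "is_tree V E"
  shows "\<not> (\<exists>f. \<forall>i. E (f i) (f (Suc i)) \<and> f (Suc (Suc i)) \<noteq> f i)"
proof
  assume "\<exists>f. \<forall>i. E (f i) (f (Suc i)) \<and> f (Suc (Suc i)) \<noteq> f i"
  then obtain f where fE: "\<And>i. E (f i) (f (Suc i))" and fnb: "\<And>i. f (Suc (Suc i)) \<noteq> f i" by blast
  have sg: "simple_graph V E" and nc: "\<nexists>cs. is_cycle E cs" using T unfolding is_tree_def by auto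
  have finV: "finite V" and irr: "\<And>x. \<not> E x x" and inV: "\<And>x y. E x y \<Longrightarrow> x \<in> V \<and> y \<in> V"
    using sg unfolding simple_graph_def by auto
  have fV: "f i \<in> V" for i using inV[OF fE[of i]] by blast
  have "\<not> inj_on f {..card V}"
  proof
    assume "inj_on f {..card V}"
    hence "card (f ` {..card V}) = Suc (card V)" by (simp add: card_image)
    moreover have "card (f ` {..card V}) \<le> card V" using fV finV by (intro card_mono) auto
    ultimately show False by simp
  qed
  then obtain a b where ab: "a \<noteq> b" "f a = f b" unfolding inj_on_def by blast
  have "\<exists>j. \<exists>i<j. f i = f j"
  proof (cases "a < b")
    case True thus ?thesis using ab by blast
  next
    case False hence "b < a" using ab(1) by simp
    thus ?thesis using ab by metis
  qed
  then obtain j where j: "\<exists>i<j. f i = f j" and jmin: "\<And>j'. j' < j \<Longrightarrow> \<not> (\<exists>i<j'. f i = f j')"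
    using exists_least_iff[of "\<lambda>j. \<exists>i<j. f i = f j"] by blast
  then obtain i where ij: "i < j" "f i = f j" by blast
  have injj: "inj_on f {i..<j}"
  proof (rule inj_onI, rule ccontr)
    fix a b assume a: "a \<in> {i..<j}" and b: "b \<in> {i..<j}" and fab: "f a = f b" and nab: "a \<noteq> b"
    show False
    proof (cases "a < b")
      case True thus False using jmin[of b] b fab by auto
    next
      case False hence "b < a" using nab by simp
      thus False using jmin[of a] a fab by auto
    qed
  qed
  define cs where "cs = map f [i..<j]"
  have len: "length cs = j - i" unfolding cs_def by simp
  have ne1: "j \<noteq> Suc i" using ij irr fE by metis
  have ne2: "j \<noteq> Suc (Suc i)" using ij fnb by metis
  have "is_cycle E cs"
    unfolding is_cycle_def
  proof (intro conjI allI impI)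
    show "3 \<le> length cs" using len ij ne1 ne2 by linarith
    show "distinct cs" unfolding cs_def using injj by (simp add: distinct_map)
    fix k assume "Suc k < length cs"
    thus "E (cs ! k) (cs ! Suc k)" unfolding cs_def using fE by simp
  next
    have "last cs = f (j - 1)" unfolding cs_def using ij by (simp add: last_map)
    moreover have "hd cs = f j" unfolding cs_def using ij by (simp add: hd_map)
    moreover have "E (f (j - 1)) (f j)" using fE[of "j-1"] ij by simp
    ultimately show "E (last cs) (hd cs)" by simp
  qed
  with nc show False by blast
qed

lemma fval_unique: "fval E p w a \<Longrightarrow> fval E p w b \<Longrightarrow> a = b"
proof (induction arbitrary: b rule: fval.induct)
  case (1 C w p g)
  note hyp = 1
  from hyp(4) obtain g' where b: "b = fcomb (image_mset g' (mset_set C))"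
    and g': "\<forall>u\<in>C. fval E (Some w) u (g' u)"
    by (cases) (simp add: hyp(1))
  have "image_mset g (mset_set C) = image_mset g' (mset_set C)"
  proof (rule image_mset_cong)
    fix u assume "u \<in># mset_set C"
    hence u: "u \<in> C" using hyp(2) by simp
    show "g u = g' u" using hyp(3) u g' by blast
  qed
  thus ?case using b by simp
qed

lemma fval_exists:
  assumes T: "is_tree V E"
  shows "\<exists>c. fval E p w c"
proof -
  define R where "R = {((Some w, u), (p, w)) | p w u. E w u \<and> p \<noteq> Some u}"
  have wfR: "wf R"
  proof (rule ccontr)
    assume "\<not> wf R"
    then obtain h where h: "\<And>i. (h (Suc i), h i) \<in> R" unfolding wf_iff_no_infinite_down_chain by blast
    define f where "f i = snd (h i)" for i
    have "\<forall>i. E (f i) (f (Suc i)) \<and> f (Suc (Suc i)) \<noteq> f i"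
    proof
      fix i
      from h[of i] have a: "E (f i) (f (Suc i))" "fst (h (Suc i)) = Some (f i)"
        unfolding R_def f_def by auto
      from h[of "Suc i"] have "fst (h (Suc i)) \<noteq> Some (f (Suc (Suc i)))"
        unfolding R_def f_def by auto
      with a show "E (f i) (f (Suc i)) \<and> f (Suc (Suc i)) \<noteq> f i" by auto
    qed
    with no_nbwalk[OF T] show False by blast
  qed
  have finV: "finite V" and inV: "\<And>x y. E x y \<Longrightarrow> x \<in> V \<and> y \<in> V"
    using T unfolding is_tree_def simple_graph_def by auto
  have "\<exists>c. fval E (fst x) (snd x) c" for x
  proof (induction x rule: wf_induct[OF wfR])
    case (1 x)
    obtain p w where x: "x = (p, w)" by fastforce
    define C where "C = {u. E w u \<and> p \<noteq> Some u}"
    have "\<exists>c. fval E (Some w) u c" if "u \<in> C" for u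
    proof -
      have "((Some w, u), x) \<in> R" using that unfolding x C_def R_def by blast
      thus ?thesis using 1 by fastforce
    qed
    hence "\<forall>u\<in>C. fval E (Some w) u ((\<lambda>u. SOME c. fval E (Some w) u c) u)" by (metis someI_ex)
    moreover have "finite C"
    proof (rule finite_subset[OF _ finV])
      show "C \<subseteq> V" unfolding C_def using inV by blast
    qed
    ultimately have "fval E p w (fcomb (image_mset (\<lambda>u. SOME c. fval E (Some w) u c) (mset_set C)))"
      by (intro fval.intros[where C=C and w=w and p=p and E=E, OF C_def]) auto
    thus ?case unfolding x by auto
  qed
  thus ?thesis by (metis fst_conv snd_conv)
qed

definition Gf :: "('a \<Rightarrow> 'a \<Rightarrow> bool) \<Rightarrow> 'a option \<Rightarrow> 'a \<Rightarrow> nat" where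
  "Gf E p w = (THE c. fval E p w c)"

lemma Gf_fval: "is_tree V E \<Longrightarrow> fval E p w (Gf E p w)"
  unfolding Gf_def by (metis fval_exists fval_unique theI)

lemma Gf_eq:
  assumes T: "is_tree V E"
  shows "Gf E p w = fcomb (image_mset (Gf E (Some w)) (mset_set {u. E w u \<and> p \<noteq> Some u}))"
proof -
  have finV: "finite V" and inV: "\<And>x y. E x y \<Longrightarrow> x \<in> V \<and> y \<in> V"
    using T unfolding is_tree_def simple_graph_def by auto
  define C where "C = {u. E w u \<and> p \<noteq> Some u}"
  have "finite C"
  proof (rule finite_subset[OF _ finV])
    show "C \<subseteq> V" unfolding C_def using inV by blast
  qed
  moreover have "\<forall>u\<in>C. fval E (Some w) u (Gf E (Some w) u)" using Gf_fval[OF T] by blast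
  ultimately have "fval E p w (fcomb (image_mset (Gf E (Some w)) (mset_set C)))"
    using fval.intros[where C=C and w=w and p=p and E=E, OF C_def] by blast
  from fval_unique[OF Gf_fval[OF T] this] show ?thesis unfolding C_def .
qed

lemma froot_Gf: "is_tree V E \<Longrightarrow> froot E v = Gf E None v"
  unfolding froot_def Gf_def by simp


lemma walk_contra:
  assumes T: "is_tree V E" and W0: "W p0 q0" and WE: "\<And>p q. W p q \<Longrightarrow> E p q"
    and Ws: "\<And>p q. W p q \<Longrightarrow> \<exists>r. W q r \<and> r \<noteq> p"
  shows False
proof -
  define nxt where "nxt = (\<lambda>(p, q). (q, SOME r. W q r \<and> r \<noteq> p))"
  define s where "s n = (nxt ^^ n) (p0, q0)" for n
  have sS: "s (Suc n) = nxt (s n)" for n unfolding s_def by simp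
  have inv: "W (fst (s n)) (snd (s n))" for n
  proof (induction n)
    case 0 thus ?case using W0 unfolding s_def by simp
  next
    case (Suc n)
    obtain p q where pq: "s n = (p, q)" by fastforce
    have "W q (SOME r. W q r \<and> r \<noteq> p) \<and> (SOME r. W q r \<and> r \<noteq> p) \<noteq> p"
      using Ws[of p q] Suc pq by (metis (mono_tags, lifting) fst_conv snd_conv someI_ex)
    thus ?case unfolding sS pq nxt_def by simp
  qed
  define f where "f n = fst (s n)" for n
  have "\<forall>i. E (f i) (f (Suc i)) \<and> f (Suc (Suc i)) \<noteq> f i"
  proof
    fix i
    obtain p q where pq: "s i = (p, q)" by fastforce
    have f1: "f (Suc i) = q" unfolding f_def sS pq nxt_def by simp
    have "snd (s (Suc i)) = (SOME r. W q r \<and> r \<noteq> p)" unfolding sS pq nxt_def by simp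
    moreover have "W q (SOME r. W q r \<and> r \<noteq> p) \<and> (SOME r. W q r \<and> r \<noteq> p) \<noteq> p"
      using Ws[of p q] inv[of i] pq by (metis (mono_tags, lifting) fst_conv snd_conv someI_ex)
    moreover have "f (Suc (Suc i)) = snd (s (Suc i))" unfolding f_def sS[of "Suc i"]
      by (metis (no_types, lifting) case_prod_beta fst_conv nxt_def)
    ultimately have "f (Suc (Suc i)) \<noteq> p" by simp
    moreover have "E p q" using WE inv[of i] pq by (metis fst_conv snd_conv)
    ultimately show "E (f i) (f (Suc i)) \<and> f (Suc (Suc i)) \<noteq> f i"
      using f1 pq unfolding f_def by simp
  qed
  with no_nbwalk[OF T] show False by blast
qed

theorem proposition4p4:
  fixes V :: "'a set" and E :: "'a \<Rightarrow> 'a \<Rightarrow> bool"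
  assumes "is_tree V E" and "card V \<ge> 3"
  shows "\<not> (\<exists>c. \<forall>v\<in>V. froot E v = c)"
proof
  assume "\<exists>c. \<forall>v\<in>V. froot E v = c"
  then obtain c where cV: "\<And>v. v \<in> V \<Longrightarrow> froot E v = c" by blast
  note T = assms(1)
  have finV: "finite V" and inV: "\<And>x y. E x y \<Longrightarrow> x \<in> V \<and> y \<in> V"
    and sym: "\<And>x y. E x y \<Longrightarrow> E y x" and conn: "\<And>x y. x \<in> V \<Longrightarrow> y \<in> V \<Longrightarrow> E\<^sup>*\<^sup>* x y"
    using T unfolding is_tree_def simple_graph_def connected_graph_def by auto
  define G where "G q r = Gf E (Some q) r" for q r
  define nb where "nb q = {u. E q u}" for q
  define N where "N q = image_mset (G q) (mset_set (nb q))" for q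
  have finnb: "finite (nb q)" for q
    by (rule finite_subset[OF _ finV]) (auto simp: nb_def dest: inV)
  have C1: "fcomb (N q) = c" if "q \<in> V" for q
  proof -
    have "froot E q = fcomb (N q)"
      unfolding froot_Gf[OF T] Gf_eq[OF T, of None q] N_def G_def nb_def by simp
    thus ?thesis using cV that by simp
  qed
  have C2: "G p q = fcomb (N q - {#G q p#}) \<and> N q = add_mset (G q p) (N q - {#G q p#})" if "E p q" for p q
  proof -
    have pin: "p \<in> nb q" using sym[OF that] unfolding nb_def by simp
    have ms: "mset_set (nb q) = add_mset p (mset_set (nb q - {p}))"
      using mset_set.remove[OF finnb pin] .
    have Nq: "N q = add_mset (G q p) (image_mset (G q) (mset_set (nb q - {p})))"
      unfolding N_def ms by simp
    have st: "{u. E q u \<and> Some p \<noteq> Some u} = nb q - {p}" unfolding nb_def by auto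
    have "G p q = fcomb (image_mset (G q) (mset_set (nb q - {p})))"
      unfolding G_def Gf_eq[OF T, of "Some p" q] st by simp
    thus ?thesis using Nq by simp
  qed
  have c1: "c \<ge> 1"
  proof (rule ccontr)
    assume "\<not> c \<ge> 1" hence c0: "c = 0" by simp
    have deg: "card (nb q) \<le> Suc 0" if "q \<in> V" for q
    proof (rule ccontr)
      assume "\<not> card (nb q) \<le> Suc 0"
      hence "size (N q) \<ge> 2" unfolding N_def by simp
      hence "fcomb (N q) \<ge> 1" by (rule fcomb_two)
      thus False using C1[OF that] c0 by simp
    qed
    have "V \<noteq> {}" using assms(2) by auto
    then obtain x where x: "x \<in> V" by blast
    have reach: "y = x \<or> E x y" if "E\<^sup>*\<^sup>* x y" for y
      using that
    proof (induction rule: rtranclp_induct)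
      case base thus ?case by simp
    next
      case (step y z)
      show ?case
      proof (cases "y = x")
        case True thus ?thesis using step by simp
      next
        case False
        hence "E x y" using step by simp
        hence yV: "y \<in> V" using inV by blast
        have "x \<in> nb y" "z \<in> nb y" using sym[OF \<open>E x y\<close>] step(2) unfolding nb_def by auto
        hence "z = x" using deg[OF yV] finnb[of y] by (metis card_le_Suc0_iff_eq)
        thus ?thesis by simp
      qed
    qed
    have "V \<subseteq> insert x (nb x)" using reach conn[OF x] unfolding nb_def by blast
    hence "card V \<le> card (insert x (nb x))" using finnb by (intro card_mono) auto
    also have "\<dots> \<le> Suc (card (nb x))" by (rule card_insert_le_m1) (auto simp: card_insert_if finnb) 
    finally show False using deg[OF x] assms(2) by simp
  qed
  have C3: "(G p q = c \<and> G q p < c) \<or> (G q p = c \<and> G p q < c) \<or> (G p q = c - 1 \<and> G q p = c - 1)"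
    if "E p q" for p q
  proof -
    have a: "G p q = fcomb (N q - {#G q p#})" "N q = add_mset (G q p) (N q - {#G q p#})" using C2[OF that] by auto
    have b: "G q p = fcomb (N p - {#G p q#})" "N p = add_mset (G p q) (N p - {#G p q#})" using C2[OF sym[OF that]] by auto
    have "fcomb (add_mset (G q p) (N q - {#G q p#})) = c" using C1 inV[OF that] a(2)[symmetric] by simp
    moreover have "fcomb (add_mset (G p q) (N p - {#G p q#})) = c" using C1 inV[OF that] b(2)[symmetric] by simp
    ultimately show ?thesis using edge_lemma[OF a(1)[symmetric] b(1)[symmetric] _ _ c1] by blast
  qed
  define W where "W p q \<longleftrightarrow> E p q \<and> G p q \<ge> c - 1 \<and> G q p \<le> c - 1" for p q
  have C5: "\<exists>p q. W p q"
  proof -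
    have "\<not> card V \<le> Suc 0" using assms(2) by simp
    then obtain x y where xy: "x \<in> V" "y \<in> V" "x \<noteq> y" using card_le_Suc0_iff_eq[OF finV] by blast
    have "E\<^sup>*\<^sup>* x y" using conn xy by blast
    then obtain z where "E x z" using xy(3) by (metis converse_rtranclpE)
    thus ?thesis using C3[of x z] unfolding W_def using sym by fastforce
  qed
  have C6: "\<exists>r. W q r \<and> r \<noteq> p" if "W p q" for p q
  proof -
    note Wpq = that
    have Epq: "E p q" using that W_def by simp
    have a: "G p q = fcomb (N q - {#G q p#})" "N q = add_mset (G q p) (N q - {#G q p#})" using C2[OF Epq] by auto
    have qV: "q \<in> V" using inV Epq by blast
    have pin: "p \<in> nb q" using sym[OF Epq] unfolding nb_def by simp
    have Nr: "N q - {#G q p#} = image_mset (G q) (mset_set (nb q - {p}))"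
      unfolding N_def mset_set.remove[OF finnb pin] by simp
    have H: "\<forall>x\<in># N q - {#G q p#}. (x = c \<and> fcomb (N q - {#x#}) < c) \<or> (x < c \<and> fcomb (N q - {#x#}) = c)
               \<or> (x = c - 1 \<and> fcomb (N q - {#x#}) = c - 1)"
    proof
      fix x assume "x \<in># N q - {#G q p#}"
      then obtain r where r: "r \<in> nb q" "x = G q r" unfolding Nr using finnb by auto
      have Erq: "E r q" using r sym unfolding nb_def by simp
      have "G r q = fcomb (N q - {#x#})" using C2[OF Erq] r by simp
      thus "(x = c \<and> fcomb (N q - {#x#}) < c) \<or> (x < c \<and> fcomb (N q - {#x#}) = c)
               \<or> (x = c - 1 \<and> fcomb (N q - {#x#}) = c - 1)" using C3[OF Erq] r by auto
    qed
    have eN: "G q p \<in># N q" using a(2) by (metis union_single_eq_member)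
    obtain x where x: "x \<in># N q - {#G q p#}" "x \<ge> c - 1" "fcomb (N q - {#x#}) \<le> c - 1"
      using mset_step[OF C1[OF qV] c1 eN _ _ H] Wpq a(1) unfolding W_def by auto
    then obtain r where r: "r \<in> nb q - {p}" "x = G q r" unfolding Nr using finnb by auto
    have Erq: "E r q" using r sym unfolding nb_def by simp
    have "G r q = fcomb (N q - {#x#})" using C2[OF Erq] r by simp
    hence "W q r" unfolding W_def using x r sym[OF Erq] by simp
    thus ?thesis using r by auto
  qed
  obtain p0 q0 where "W p0 q0" using C5 by blast
  show False
  proof (rule walk_contra[where W=W, OF T \<open>W p0 q0\<close>])
    show "\<And>p q. W p q \<Longrightarrow> E p q" unfolding W_def by simp
    show "\<And>p q. W p q \<Longrightarrow> \<exists>r. W q r \<and> r \<noteq> p" by (rule C6)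
  qed
qed

end
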